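(* Let $G$ be a connected $(2K_2, K_5-e)$-free graph. Then either $G$ is $(2K_2,\text{diamond})$-free, or there exists a partition $(V_1,\dots,V_5)$ of $V(G)$ (parts possibly empty) such that (i) $G[V_1]$ is a $(2K_2,\text{diamond})$-free graph with $\omega(G[V_1])\le\omega(G)-1$, and (ii) $V_i$ is an independent set for each $i\in\{2,3,4,5\}$.
   Context: All graphs are finite, simple and undirected. $2K_2$ is the disjoint union of two edges. $K_5-e$ is the complete graph on 5 vertices minus one edge. A diamond is $K_4$ minus an edge. A graph is $\mathcal F$-free if it has no induced subgraph isomorphic to a member of $\mathcal F$. $G[S]$ is the subgraph induced by $S$; $\omega$ is the clique number. *)

theory Defs
  imports Main
begin

text \<open>A finite simple graph is a finite vertex set V with a symmetric,
  irreflexive adjacency relation E (only its restriction to V matters).\<close>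

definition simple_graph :: "'a set \<Rightarrow> ('a \<Rightarrow> 'a \<Rightarrow> bool) \<Rightarrow> bool" where
  "simple_graph V E \<longleftrightarrow> finite V \<and> (\<forall>x y. E x y \<longrightarrow> E y x) \<and> (\<forall>x. \<not> E x x)"

definition contains_induced ::
  "'b set \<Rightarrow> ('b \<Rightarrow> 'b \<Rightarrow> bool) \<Rightarrow> 'a set \<Rightarrow> ('a \<Rightarrow> 'a \<Rightarrow> bool) \<Rightarrow> bool" where
  "contains_induced VH EH V E \<longleftrightarrow>
     (\<exists>f. inj_on f VH \<and> f ` VH \<subseteq> V \<and>
          (\<forall>x\<in>VH. \<forall>y\<in>VH. E (f x) (f y) \<longleftrightarrow> EH x y))"

definition twoK2_E :: "nat \<Rightarrow> nat \<Rightarrow> bool" where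
  "twoK2_E x y \<longleftrightarrow> {x, y} = {0, 1} \<or> {x, y} = {2, 3}"

definition K5e_E :: "nat \<Rightarrow> nat \<Rightarrow> bool" where
  "K5e_E x y \<longleftrightarrow> x \<noteq> y \<and> {x, y} \<noteq> {0, 1}"

definition diamond_E :: "nat \<Rightarrow> nat \<Rightarrow> bool" where
  "diamond_E x y \<longleftrightarrow> x \<noteq> y \<and> {x, y} \<noteq> {0, 1}"

definition twoK2_free :: "'a set \<Rightarrow> ('a \<Rightarrow> 'a \<Rightarrow> bool) \<Rightarrow> bool" where
  "twoK2_free V E \<longleftrightarrow> \<not> contains_induced {0..<4} twoK2_E V E"

definition K5e_free :: "'a set \<Rightarrow> ('a \<Rightarrow> 'a \<Rightarrow> bool) \<Rightarrow> bool" where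
  "K5e_free V E \<longleftrightarrow> \<not> contains_induced {0..<5} K5e_E V E"

definition diamond_free :: "'a set \<Rightarrow> ('a \<Rightarrow> 'a \<Rightarrow> bool) \<Rightarrow> bool" where
  "diamond_free V E \<longleftrightarrow> \<not> contains_induced {0..<4} diamond_E V E"

definition connected_graph :: "'a set \<Rightarrow> ('a \<Rightarrow> 'a \<Rightarrow> bool) \<Rightarrow> bool" where
  "connected_graph V E \<longleftrightarrow> V \<noteq> {} \<and>
     (\<forall>u\<in>V. \<forall>v\<in>V. (\<lambda>x y. x \<in> V \<and> y \<in> V \<and> E x y)\<^sup>*\<^sup>* u v)"

definition is_clique :: "'a set \<Rightarrow> ('a \<Rightarrow> 'a \<Rightarrow> bool) \<Rightarrow> 'a set \<Rightarrow> bool" where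
  "is_clique V E C \<longleftrightarrow> C \<subseteq> V \<and> (\<forall>x\<in>C. \<forall>y\<in>C. x \<noteq> y \<longrightarrow> E x y)"

definition clique_number :: "'a set \<Rightarrow> ('a \<Rightarrow> 'a \<Rightarrow> bool) \<Rightarrow> nat" where
  "clique_number V E = Max (card ` {C. is_clique V E C})"

definition independent_set :: "'a set \<Rightarrow> ('a \<Rightarrow> 'a \<Rightarrow> bool) \<Rightarrow> 'a set \<Rightarrow> bool" where
  "independent_set V E S \<longleftrightarrow> S \<subseteq> V \<and> (\<forall>x\<in>S. \<forall>y\<in>S. \<not> E x y)"

end

theory Submission
  imports Defs
begin

lemma ci_mono:
  assumes "S \<subseteq> V" "contains_induced H EH S E" shows "contains_induced H EH V E"
proof -
  from assms(2) obtain f where "inj_on f H" "f ` H \<subseteq> S"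
    "\<forall>x\<in>H. \<forall>y\<in>H. E (f x) (f y) \<longleftrightarrow> EH x y" unfolding contains_induced_def by blast
  moreover have "f ` H \<subseteq> V" using \<open>f ` H \<subseteq> S\<close> assms(1) by (rule subset_trans)
  ultimately show ?thesis unfolding contains_induced_def by blast
qed

lemma bi: "(\<forall>x\<in>insert a B. P x) \<longleftrightarrow> P a \<and> (\<forall>x\<in>B. P x)" by simp

lemma twoK2_lemma:
  assumes sg: "simple_graph V E" and "x\<in>V" "y\<in>V" "a\<in>V" "b\<in>V" "E x y" "E a b"
    "\<not>E x a" "\<not>E x b" "\<not>E y a" "\<not>E y b"
  shows "contains_induced {0..<4} twoK2_E V E"
proof -
  from sg have sym: "\<And>p q. E p q \<Longrightarrow> E q p" and irr: "\<And>p. \<not>E p p"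
    by (auto simp: simple_graph_def)
  have d: "x\<noteq>y" "a\<noteq>b" "x\<noteq>a" "x\<noteq>b" "y\<noteq>a" "y\<noteq>b" using assms irr sym by metis+
  have e: "E y x" "E b a" "\<not>E a x" "\<not>E b x" "\<not>E a y" "\<not>E b y" using assms sym by metis+
  define f where "f = (\<lambda>i::nat. if i=0 then x else if i=1 then y else if i=2 then a else b)"
  have U: "{0..<4::nat} = {0,1,2,3}" by auto
  have f: "f 0 = x" "f 1 = y" "f 2 = a" "f 3 = b" by (simp_all add: f_def)
  have T: "twoK2_E 0 1" "twoK2_E 1 0" "twoK2_E 2 3" "twoK2_E 3 2"
     "\<not>twoK2_E 0 0" "\<not>twoK2_E 1 1" "\<not>twoK2_E 2 2" "\<not>twoK2_E 3 3"
     "\<not>twoK2_E 0 2" "\<not>twoK2_E 0 3" "\<not>twoK2_E 1 2" "\<not>twoK2_E 1 3"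
     "\<not>twoK2_E 2 0" "\<not>twoK2_E 3 0" "\<not>twoK2_E 2 1" "\<not>twoK2_E 3 1"
    by (auto simp: twoK2_E_def doubleton_eq_iff)
  have "inj_on f {0..<4}" unfolding U inj_on_def f_def using d by auto
  moreover have "f ` {0..<4} \<subseteq> V" unfolding U f_def using assms by auto
  moreover have "\<forall>i\<in>{0..<4}. \<forall>j\<in>{0..<4}. E (f i) (f j) \<longleftrightarrow> twoK2_E i j"
    unfolding U bi ball_empty f using T e assms irr by simp
  ultimately show ?thesis unfolding contains_induced_def by blast
qed

lemma K5e_lemma:
  assumes sg: "simple_graph V E" and "p\<in>V" "q\<in>V" "r\<in>V" "s\<in>V" "t\<in>V" "p\<noteq>q" "\<not>E p q"
    "E p r" "E p s" "E p t" "E q r" "E q s" "E q t" "E r s" "E r t" "E s t"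
  shows "contains_induced {0..<5} K5e_E V E"
proof -
  from sg have sym: "\<And>p q. E p q \<Longrightarrow> E q p" and irr: "\<And>p. \<not>E p p"
    by (auto simp: simple_graph_def)
  have d: "p\<noteq>r" "p\<noteq>s" "p\<noteq>t" "q\<noteq>r" "q\<noteq>s" "q\<noteq>t" "r\<noteq>s" "r\<noteq>t" "s\<noteq>t"
    using assms irr by metis+
  have e: "\<not>E q p" "E r p" "E s p" "E t p" "E r q" "E s q" "E t q" "E s r" "E t r" "E t s"
    using assms sym by metis+
  define f where "f = (\<lambda>i::nat. if i=0 then p else if i=1 then q else if i=2 then r else if i=3 then s else t)"
  have U: "{0..<5::nat} = {0,1,2,3,4}" by auto
  have f: "f 0 = p" "f 1 = q" "f 2 = r" "f 3 = s" "f 4 = t" by (simp_all add: f_def)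
  have K: "\<And>i j. K5e_E i j \<longleftrightarrow> i \<noteq> j \<and> \<not>(i \<le> 1 \<and> j \<le> 1)"
    by (auto simp: K5e_E_def doubleton_eq_iff)
  have "inj_on f {0..<5}" unfolding U inj_on_def f_def using d assms by auto
  moreover have "f ` {0..<5} \<subseteq> V" unfolding U f_def using assms by auto
  moreover have "\<forall>i\<in>{0..<5}. \<forall>j\<in>{0..<5}. E (f i) (f j) \<longleftrightarrow> K5e_E i j"
    unfolding U bi ball_empty f K using e assms irr by simp
  ultimately show ?thesis unfolding contains_induced_def by blast
qed

lemma clique_finite:
  assumes "finite V" shows "finite {C. is_clique V E C}" "{} \<in> {C. is_clique V E C}"
proof -
  have "{C. is_clique V E C} \<subseteq> Pow V" by (auto simp: is_clique_def)
  then show "finite {C. is_clique V E C}" using assms finite_subset by blast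
  show "{} \<in> {C. is_clique V E C}" by (simp add: is_clique_def)
qed

theorem theorem3p9:
  fixes V :: "'a set" and E :: "'a \<Rightarrow> 'a \<Rightarrow> bool"
  assumes "simple_graph V E"
    and "connected_graph V E"
    and "twoK2_free V E"
    and "K5e_free V E"
  shows "(twoK2_free V E \<and> diamond_free V E) \<or>
         (\<exists>P :: nat \<Rightarrow> 'a set.
            (\<Union>i\<in>{1..5}. P i) = V \<and>
            (\<forall>i\<in>{1..5}. \<forall>j\<in>{1..5}. i \<noteq> j \<longrightarrow> P i \<inter> P j = {}) \<and>
            twoK2_free (P 1) E \<and> diamond_free (P 1) E \<and>
            clique_number (P 1) E \<le> clique_number V E - 1 \<and>
            (\<forall>i\<in>{2..5}. independent_set V E (P i)))"
proof (cases "diamond_free V E")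
  case True then show ?thesis using assms(3) by blast
next
  case False
  note sg = assms(1)
  from sg have sym: "\<And>p q. E p q \<Longrightarrow> E q p" and irr: "\<And>p. \<not>E p p" and fin: "finite V"
    by (auto simp: simple_graph_def)
  from False obtain f where finj: "inj_on f {0..<4}" and fV: "f ` {0..<4} \<subseteq> V"
    and fE: "\<forall>i\<in>{0..<4}. \<forall>j\<in>{0..<4}. E (f i) (f j) \<longleftrightarrow> diamond_E i j"
    unfolding diamond_free_def contains_induced_def by blast
  have U4: "{0..<4::nat} = {0,1,2,3}" by auto
  define x where "x = f 2"
  define y where "y = f 3"
  define u where "u = f 0"
  define v where "v = f 1"
  have inV: "x \<in> V" "y \<in> V" "u \<in> V" "v \<in> V" using fV unfolding x_def y_def u_def v_def U4 by auto
  have uv: "u \<noteq> v" using finj unfolding u_def v_def U4 inj_on_def by auto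
  have dE: "\<And>i j. diamond_E i j \<longleftrightarrow> i \<noteq> j \<and> {i, j} \<noteq> {0, 1}" by (simp add: diamond_E_def)
  have edges: "E x y" "E x u" "E x v" "E y u" "E y v" "\<not> E u v"
    using fE unfolding x_def y_def u_def v_def U4 dE by (auto simp: doubleton_eq_iff)
  define N where "N = {w\<in>V. E x w}"
  define M where "M = {w\<in>V. w \<noteq> x \<and> \<not> E x w}"
  define P :: "nat \<Rightarrow> 'a set" where "P = (\<lambda>i. if i = 1 then N
     else if i = 2 then insert x {w\<in>M. \<not> E y w}
     else if i = 3 then {w\<in>M. E y w \<and> \<not> E u w}
     else if i = 4 then {w\<in>M. E y w \<and> E u w \<and> \<not> E v w}
     else if i = 5 then {w\<in>M. E y w \<and> E u w \<and> E v w} else {})"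
  have P1: "P 1 = N" and P2: "P 2 = insert x {w\<in>M. \<not> E y w}"
    and P3: "P 3 = {w\<in>M. E y w \<and> \<not> E u w}"
    and P4: "P 4 = {w\<in>M. E y w \<and> E u w \<and> \<not> E v w}"
    and P5: "P 5 = {w\<in>M. E y w \<and> E u w \<and> E v w}" by (simp_all add: P_def)
  have U5: "{1..5::nat} = {1,2,3,4,5}" by auto
  have U25: "{2..5::nat} = {2,3,4,5}" by auto
  have c1: "(\<Union>i\<in>{1..5}. P i) = V"
  proof -
    have "(\<Union>i\<in>{1..5}. P i) = P 1 \<union> (P 2 \<union> (P 3 \<union> (P 4 \<union> P 5)))"
      by (simp only: U5 image_insert image_empty Union_insert Union_empty Un_empty_right)
    also have "\<dots> = V" unfolding P1 P2 P3 P4 P5 N_def M_def using inV by auto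
    finally show ?thesis .
  qed
  have c2: "\<forall>i\<in>{1..5}. \<forall>j\<in>{1..5}. i \<noteq> j \<longrightarrow> P i \<inter> P j = {}"
    unfolding U5 bi ball_empty P1 P2 P3 P4 P5 N_def M_def using irr by auto
  have NV: "N \<subseteq> V" unfolding N_def by auto
  have c3: "twoK2_free (P 1) E"
    using assms(3) ci_mono[OF NV] unfolding twoK2_free_def P1 by auto
  have c4: "diamond_free (P 1) E"
  proof -
    have "\<not> contains_induced {0..<4} diamond_E N E"
    proof
      assume "contains_induced {0..<4} diamond_E N E"
      then obtain g where ginj: "inj_on g {0..<4}" and gV: "g ` {0..<4} \<subseteq> N"
        and gE: "\<forall>i\<in>{0..<4}. \<forall>j\<in>{0..<4}. E (g i) (g j) \<longleftrightarrow> diamond_E i j"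
        unfolding contains_induced_def by blast
      have gN: "g 0 \<in> N" "g 1 \<in> N" "g 2 \<in> N" "g 3 \<in> N" using gV unfolding U4 by auto
      have g01: "g 0 \<noteq> g 1" using ginj unfolding U4 inj_on_def by auto
      have ge: "\<not> E (g 0) (g 1)" "E (g 0) (g 2)" "E (g 0) (g 3)" "E (g 1) (g 2)" "E (g 1) (g 3)"
        "E (g 2) (g 3)"
        using gE unfolding U4 dE by (auto simp: doubleton_eq_iff)
      have "contains_induced {0..<5} K5e_E V E"
        apply (rule K5e_lemma[OF sg, of "g 0" "g 1" "g 2" "g 3" x])
        using gN inV g01 ge sym unfolding N_def by auto
      then show False using assms(4) unfolding K5e_free_def by blast
    qed
    then show ?thesis unfolding diamond_free_def P1 by simp
  qed
  have c5: "clique_number (P 1) E \<le> clique_number V E - 1"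
  proof -
    have finN: "finite N" using fin NV finite_subset by blast
    have "\<forall>k \<in> card ` {C. is_clique N E C}. k \<le> clique_number V E - 1"
    proof
      fix k assume "k \<in> card ` {C. is_clique N E C}"
      then obtain C where C: "is_clique N E C" and k: "k = card C" by blast
      have CN: "C \<subseteq> N" using C by (simp add: is_clique_def)
      have finC: "finite C" using CN finN finite_subset by blast
      have xC: "x \<notin> C" using CN irr unfolding N_def by auto
      have "is_clique V E (insert x C)"
        using C CN inV sym unfolding is_clique_def N_def by auto
      then have "card (insert x C) \<le> clique_number V E"
        unfolding clique_number_def using clique_finite[OF fin] by (intro Max_ge) auto
      then show "k \<le> clique_number V E - 1" using finC xC k by simp
    qed
    then show ?thesis unfolding clique_number_def P1
      using clique_finite[OF finN, of E] by (subst Max_le_iff) auto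
  qed
  have indep2: "\<And>p q a b. p \<in> V \<Longrightarrow> q \<in> V \<Longrightarrow> E p q \<Longrightarrow> S \<subseteq> V \<Longrightarrow>
      (\<forall>w\<in>S. \<not> E p w \<and> \<not> E q w) \<Longrightarrow> independent_set V E S" for S
  proof -
    fix p q assume *: "p \<in> V" "q \<in> V" "E p q" "S \<subseteq> V" "\<forall>w\<in>S. \<not> E p w \<and> \<not> E q w"
    show "independent_set V E S" unfolding independent_set_def
    proof (intro conjI ballI)
      show "S \<subseteq> V" by fact
      fix a b assume "a \<in> S" "b \<in> S"
      show "\<not> E a b"
      proof
        assume "E a b"
        then have "contains_induced {0..<4} twoK2_E V E"
          using twoK2_lemma[OF sg, of p q a b] * \<open>a \<in> S\<close> \<open>b \<in> S\<close> by auto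
        then show False using assms(3) unfolding twoK2_free_def by blast
      qed
    qed
  qed
  have i2: "independent_set V E (P 2)"
    unfolding independent_set_def P2
  proof (intro conjI ballI)
    show "insert x {w\<in>M. \<not> E y w} \<subseteq> V" unfolding M_def using inV by auto
    fix a b assume a: "a \<in> insert x {w\<in>M. \<not> E y w}" and b: "b \<in> insert x {w\<in>M. \<not> E y w}"
    have I: "independent_set V E {w\<in>M. \<not> E y w}"
      by (rule indep2[of x y]) (use inV edges in \<open>auto simp: M_def\<close>)
    have xM: "\<And>w. w \<in> M \<Longrightarrow> \<not> E x w \<and> \<not> E w x" unfolding M_def using sym by blast
    show "\<not> E a b"
    proof (cases "a = x")
      case True then show ?thesis using b irr xM by auto
    next
      case False
      then have aS: "a \<in> {w\<in>M. \<not> E y w}" using a by blast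
      show ?thesis
      proof (cases "b = x")
        case True then show ?thesis using aS xM by auto
      next
        case False
        then have "b \<in> {w\<in>M. \<not> E y w}" using b by blast
        then show ?thesis using aS I unfolding independent_set_def by blast
      qed
    qed
  qed
  have i3: "independent_set V E (P 3)" unfolding P3
    by (rule indep2[of x u]) (use inV edges in \<open>auto simp: M_def\<close>)
  have i4: "independent_set V E (P 4)" unfolding P4
    by (rule indep2[of x v]) (use inV edges in \<open>auto simp: M_def\<close>)
  have i5: "independent_set V E (P 5)" unfolding P5 independent_set_def
  proof (intro conjI ballI)
    show "{w \<in> M. E y w \<and> E u w \<and> E v w} \<subseteq> V" unfolding M_def by auto
    fix a b assume a: "a \<in> {w \<in> M. E y w \<and> E u w \<and> E v w}" and b: "b \<in> {w \<in> M. E y w \<and> E u w \<and> E v w}"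
    show "\<not> E a b"
    proof
      assume ab: "E a b"
      have "contains_induced {0..<5} K5e_E V E"
        apply (rule K5e_lemma[OF sg, of u v y a b])
        using a b ab inV uv edges sym unfolding M_def by auto
      then show False using assms(4) unfolding K5e_free_def by blast
    qed
  qed
  have c6: "\<forall>i\<in>{2..5}. independent_set V E (P i)" unfolding U25 using i2 i3 i4 i5 by auto
  show ?thesis using c1 c2 c3 c4 c5 c6 by blast
qed

end
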